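(* Let $B=(b_{ij})$ be an $n\times n$ skew-symmetrizable integer matrix and let $D=\operatorname{diag}(d_1,\dots,d_n)$ be a skew-symmetrizer of $B$ (positive integers $d_i$ with $DB$ skew-symmetric), and put $\mathbf d=(d_1,\dots,d_n)$. Then for every $k\in\{1,\dots,n\}$ the weighted quivers $\mu_k(Q_B,\mathbf d)$ and $(Q_{\mu_k(B)},\mathbf d)$ are isomorphic (as weighted quivers on the vertex set $\{1,\dots,n\}$ with weight tuple $\mathbf d$).
   Context: A weighted quiver is a pair $(Q,\mathbf d)$ where $Q$ is a finite loop-free quiver on vertex set $Q_0$ (multiple arrows and 2-cycles allowed) and $\mathbf d=(d_i)_{i\in Q_0}$ is a tuple of positive integers. For $B$ and $D$ as in the claim, $Q_B$ is the quiver on vertex set $\{1,\dots,n\}$ having, for every pair $i,j$ with $c_{ij}\ge 0$, exactly $c_{ij}$ arrows from $j$ to $i$, where $c_{ij}=\gcd(d_i,d_j)b_{ij}/d_j$ (the matrix $(c_{ij})$ is a skew-symmetric integer matrix). Matrix mutation: $\mu_k(B)=B'$ with $b'_{ij}=-b_{ij}$ if $i=k$ or $j=k$, and $b'_{ij}=b_{ij}+\frac{b_{ik}|b_{kj}|+|b_{ik}|b_{kj}}{2}$ otherwise. Mutation of a weighted quiver $(Q,\mathbf d)$ at a vertex $k$: $\mu_k(Q,\mathbf d)$ has the same vertex set and weight tuple, and its quiver is obtained by (1) for each pair of arrows $j\to k$, $k\to i$, adding $\frac{\gcd(d_i,d_j)d_k}{\gcd(d_i,d_k)\gcd(d_k,d_j)}$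 new arrows from $j$ to $i$; (2) reversing every arrow incident to $k$; (3) choosing a maximal collection of pairwise disjoint oriented 2-cycles and deleting its arrows. *)

theory Defs
  imports Main
begin

text \<open>Vertices are 1..n. A matrix is a function nat => nat => int (entries outside
{1..n} are ignored). A quiver on {1..n} is given by its arrow multiplicities:
arr x y = number of arrows from x to y.\<close>

type_synonym quiver = "nat \<Rightarrow> nat \<Rightarrow> nat"

definition skew_symmetrizer :: "nat \<Rightarrow> (nat \<Rightarrow> nat \<Rightarrow> int) \<Rightarrow> (nat \<Rightarrow> nat) \<Rightarrow> bool" where
  "skew_symmetrizer n B d \<longleftrightarrow>
     (\<forall>i\<in>{1..n}. d i > 0) \<and>
     (\<forall>i\<in>{1..n}. \<forall>j\<in>{1..n}. int (d i) * B i j = - (int (d j) * B j i))"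

definition cmat :: "(nat \<Rightarrow> nat \<Rightarrow> int) \<Rightarrow> (nat \<Rightarrow> nat) \<Rightarrow> nat \<Rightarrow> nat \<Rightarrow> int" where
  "cmat B d i j = int (gcd (d i) (d j)) * B i j div int (d j)"

definition quiver_of :: "nat \<Rightarrow> (nat \<Rightarrow> nat \<Rightarrow> int) \<Rightarrow> (nat \<Rightarrow> nat) \<Rightarrow> quiver" where
  "quiver_of n B d = (\<lambda>x y. if x \<in> {1..n} \<and> y \<in> {1..n} \<and> cmat B d y x \<ge> 0
                              then nat (cmat B d y x) else 0)"

definition matrix_mutation :: "nat \<Rightarrow> (nat \<Rightarrow> nat \<Rightarrow> int) \<Rightarrow> (nat \<Rightarrow> nat \<Rightarrow> int)" where
  "matrix_mutation k B = (\<lambda>i j. if i = k \<or> j = k then - B i j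
      else B i j + (B i k * \<bar>B k j\<bar> + \<bar>B i k\<bar> * B k j) div 2)"

definition mut_weight :: "(nat \<Rightarrow> nat) \<Rightarrow> nat \<Rightarrow> nat \<Rightarrow> nat \<Rightarrow> nat" where
  "mut_weight d i j k = gcd (d i) (d j) * d k div (gcd (d i) (d k) * gcd (d k) (d j))"

definition mut_step1 :: "nat \<Rightarrow> (nat \<Rightarrow> nat) \<Rightarrow> nat \<Rightarrow> quiver \<Rightarrow> quiver" where
  "mut_step1 n d k Q = (\<lambda>j i. Q j i +
      (if j \<in> {1..n} \<and> i \<in> {1..n} \<and> j \<noteq> i then Q j k * Q k i * mut_weight d i j k else 0))"

definition mut_step2 :: "nat \<Rightarrow> quiver \<Rightarrow> quiver" where
  "mut_step2 k Q = (\<lambda>x y. if x = k \<or> y = k then Q y x else Q x y)"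

text \<open>Step (3): deleting a maximal collection of pairwise disjoint oriented 2-cycles
removes min(Q x y, Q y x) arrows in each direction between x and y.\<close>
definition mut_step3 :: "quiver \<Rightarrow> quiver" where
  "mut_step3 Q = (\<lambda>x y. Q x y - min (Q x y) (Q y x))"

definition wquiver_mutation :: "nat \<Rightarrow> (nat \<Rightarrow> nat) \<Rightarrow> nat \<Rightarrow> quiver \<Rightarrow> quiver" where
  "wquiver_mutation n d k Q = mut_step3 (mut_step2 k (mut_step1 n d k Q))"

text \<open>Isomorphism of weighted quivers (Q1,d) and (Q2,d) on vertex set {1..n}:
a weight-preserving vertex bijection inducing a bijection on arrows, i.e. preserving
all arrow multiplicities.\<close>
definition wquiver_iso :: "nat \<Rightarrow> (nat \<Rightarrow> nat) \<Rightarrow> quiver \<Rightarrow> quiver \<Rightarrow> bool" where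
  "wquiver_iso n d Q1 Q2 \<longleftrightarrow>
     (\<exists>\<sigma>. bij_betw \<sigma> {1..n} {1..n} \<and> (\<forall>i\<in>{1..n}. d (\<sigma> i) = d i) \<and>
          (\<forall>i\<in>{1..n}. \<forall>j\<in>{1..n}. Q2 (\<sigma> i) (\<sigma> j) = Q1 i j))"

end

theory Submission
  imports Defs
begin

lemma cm_exact:
  assumes sk: "int (d i) * B i j = - (int (d j) * B j i)"
  shows "int (d j) * cmat B d i j = int (gcd (d i) (d j)) * B i j"
proof -
  obtain u v where uv: "u * int (d i) + v * int (d j) = gcd (int (d i)) (int (d j))"
    using bezout_int by blast
  have g: "int (gcd (d i) (d j)) = u * int (d i) + v * int (d j)" using uv by simp
  have "int (gcd (d i) (d j)) * B i j = int (d j) * (v * B i j - u * B j i)"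
    unfolding g using sk by (simp add: algebra_simps)
  hence "int (d j) dvd int (gcd (d i) (d j)) * B i j" by simp
  thus ?thesis unfolding cmat_def by simp
qed

lemma gcd3_dvd: "gcd a c * gcd c b dvd gcd a b * (c::nat)"
proof -
  have "gcd a c * gcd c b dvd a * c" by (simp add: mult_dvd_mono)
  moreover have "gcd a c * gcd c b dvd b * c"
    by (metis dvd_mult_right gcd_dvd1 gcd_dvd2 mult.commute mult_dvd_mono)
  ultimately have "gcd a c * gcd c b dvd gcd (a*c) (b*c)" by simp
  thus ?thesis by (simp add: gcd_mult_right ac_simps)
qed

lemma mw_exact: "int (gcd (d i) (d k) * gcd (d k) (d j)) * int (mut_weight d i j k)
   = int (gcd (d i) (d j)) * int (d k)"
proof -
  have "gcd (d i) (d k) * gcd (d k) (d j) * mut_weight d i j k = gcd (d i) (d j) * d k"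
    unfolding mut_weight_def using gcd3_dvd[of "d i" "d k" "d j"] by simp
  thus ?thesis by (metis of_nat_mult)
qed

lemma cancel_int: "(a::int) > 0 \<Longrightarrow> a * b = a * c \<Longrightarrow> b = c" by simp

lemma div_exact: "(dj::int) > 0 \<Longrightarrow> dj * r = gg * b \<Longrightarrow> gg * b div dj = r"
  by (metis nonzero_mult_div_cancel_left less_irrefl)

theorem mainTheorem1:
  fixes n :: nat and B :: "nat \<Rightarrow> nat \<Rightarrow> int" and d :: "nat \<Rightarrow> nat" and k :: nat
  assumes "skew_symmetrizer n B d"
    and "k \<in> {1..n}"
  shows "wquiver_iso n d (wquiver_mutation n d k (quiver_of n B d))
                         (quiver_of n (matrix_mutation k B) d)"
proof -
  let ?V = "{1..n}"
  have dpos: "\<And>i. i \<in> ?V \<Longrightarrow> int (d i) > 0" using assms(1) unfolding skew_symmetrizer_def by auto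
  have sk: "\<And>i j. i \<in> ?V \<Longrightarrow> j \<in> ?V \<Longrightarrow> int (d i) * B i j = - (int (d j) * B j i)"
    using assms(1) unfolding skew_symmetrizer_def by blast
  define c where "c = cmat B d"
  define g where "g = (\<lambda>i j. int (gcd (d i) (d j)))"
  have gpos: "\<And>i j. i \<in> ?V \<Longrightarrow> g i j > 0" unfolding g_def using dpos
    by (simp add: gcd_pos_nat)
  have gc: "\<And>i j. g i j = g j i" unfolding g_def by (simp add: gcd.commute)
  have ex: "\<And>i j. i \<in> ?V \<Longrightarrow> j \<in> ?V \<Longrightarrow> int (d j) * c i j = g i j * B i j"
    unfolding c_def g_def using cm_exact sk by blast
  have skc: "\<And>i j. i \<in> ?V \<Longrightarrow> j \<in> ?V \<Longrightarrow> c j i = - c i j"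
  proof -
    fix i j assume i: "i \<in> ?V" and j: "j \<in> ?V"
    have "int (d i) * int (d j) * c j i = int (d j) * (g j i * B j i)"
      using ex[OF j i] by (simp add: ac_simps)
    also have "\<dots> = - (g i j * (int (d i) * B i j))" using sk[OF i j] gc[of i j] by (simp add: ac_simps)
    also have "\<dots> = int (d i) * int (d j) * (- c i j)" using ex[OF i j] by (simp add: algebra_simps)
    finally have e: "int (d i) * int (d j) * c j i = int (d i) * int (d j) * (- c i j)" .
    have "int (d i) * int (d j) > 0" using dpos[OF i] dpos[OF j] by simp
    from cancel_int[OF this e] show "c j i = - c i j" .
  qed
  have Bsk: "\<And>i j. i \<in> ?V \<Longrightarrow> j \<in> ?V \<Longrightarrow> (B i j > 0 \<longleftrightarrow> B j i < 0) \<and> (B i j = 0 \<longleftrightarrow> B j i = 0)"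
  proof -
    fix i j assume i: "i \<in> ?V" and j: "j \<in> ?V"
    have "int (d i) * B i j = - (int (d j) * B j i)" using sk[OF i j] .
    with dpos[OF i] dpos[OF j] show "(B i j > 0 \<longleftrightarrow> B j i < 0) \<and> (B i j = 0 \<longleftrightarrow> B j i = 0)"
      by (smt (verit) mult_pos_pos mult_pos_neg mult_eq_0_iff)
  qed
  have sgn: "\<And>i j. i \<in> ?V \<Longrightarrow> j \<in> ?V \<Longrightarrow> (c i j > 0 \<longleftrightarrow> B i j > 0) \<and> (c i j < 0 \<longleftrightarrow> B i j < 0)"
  proof -
    fix i j assume i: "i \<in> ?V" and j: "j \<in> ?V"
    have e: "int (d j) * c i j = g i j * B i j" using ex[OF i j] .
    have "0 < int (d j)" "0 < g i j" using dpos[OF j] gpos[OF i] by auto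
    with e show "(c i j > 0 \<longleftrightarrow> B i j > 0) \<and> (c i j < 0 \<longleftrightarrow> B i j < 0)"
      by (smt (verit) zero_less_mult_iff mult_less_0_iff)
  qed
  define Q where "Q = quiver_of n B d"
  have Qi: "\<And>x y. x \<in> ?V \<Longrightarrow> y \<in> ?V \<Longrightarrow> int (Q x y) = max (c y x) 0"
    unfolding Q_def quiver_of_def c_def by auto
  define B' where "B' = matrix_mutation k B"
  have Q'i: "\<And>x y. x \<in> ?V \<Longrightarrow> y \<in> ?V \<Longrightarrow> int (quiver_of n B' d x y) = max (cmat B' d y x) 0"
    unfolding quiver_of_def by auto
  have key: "wquiver_mutation n d k Q x y = quiver_of n B' d x y" if x: "x \<in> ?V" and y: "y \<in> ?V" for x y
  proof -
    have ckk: "c k k = 0" using skc[OF assms(2) assms(2)] by simp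
    have Qkk: "Q k k = 0" using Qi[OF assms(2) assms(2)] ckk by simp
    have cxx: "c x x = 0" using skc[OF x x] by simp
    have Bxx: "B x x = 0" using sk[OF x x] dpos[OF x] by simp
    have W: "wquiver_mutation n d k Q x y = mut_step2 k (mut_step1 n d k Q) x y
               - min (mut_step2 k (mut_step1 n d k Q) x y) (mut_step2 k (mut_step1 n d k Q) y x)"
      unfolding wquiver_mutation_def mut_step3_def by simp
    have N: "\<And>a b. a \<in> ?V \<Longrightarrow> b \<in> ?V \<Longrightarrow> mut_step1 n d k Q a b =
               Q a b + (if a \<noteq> b then Q a k * Q k b * mut_weight d b a k else 0)"
      by (simp add: mut_step1_def)
    show ?thesis
    proof (cases "x = y")
      case True
      have "cmat B' d y x = 0"
      proof -
        have "B' x x = 0"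
        proof (cases "x = k")
          case True then show ?thesis unfolding B'_def matrix_mutation_def using Bxx by simp
        next
          case False
          have "B x k * \<bar>B k x\<bar> + \<bar>B x k\<bar> * B k x = 0"
            using Bsk[OF x assms(2)] by (cases "B x k > 0"; cases "B x k = 0"; auto simp: abs_if)
          then show ?thesis unfolding B'_def matrix_mutation_def using Bxx False by simp
        qed
        thus ?thesis using True unfolding cmat_def by simp
      qed
      hence "quiver_of n B' d x y = 0" using Q'i[OF x y] by simp
      with W True show ?thesis by simp
    next
      case xy: False
      show ?thesis
      proof (cases "x = k \<or> y = k")
        case True
        have cm: "cmat B' d y x = - c y x"
        proof -
          have "B' y x = - B y x" using True unfolding B'_def matrix_mutation_def by auto
          hence "cmat B' d y x = g y x * (- B y x) div int (d x)" unfolding cmat_def g_def by simp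
          also have "\<dots> = - c y x" by (rule div_exact) (use dpos[OF x] ex[OF y x] g_def in auto)
          finally show ?thesis .
        qed
        have m: "mut_step2 k (mut_step1 n d k Q) x y = Q y x" "mut_step2 k (mut_step1 n d k Q) y x = Q x y"
          using True N[OF x y] N[OF y x] Qkk xy by (auto simp: mut_step2_def)
        have "int (wquiver_mutation n d k Q x y) = int (quiver_of n B' d x y)"
          unfolding W m using Q'i[OF x y] Qi[OF x y] Qi[OF y x] cm skc[OF x y] by auto
        thus ?thesis by simp
      next
        case False
        hence xk: "x \<noteq> k" and yk: "y \<noteq> k" by auto
        define P1 where "P1 = int (Q x k * Q k y * mut_weight d y x k)"
        define P2 where "P2 = int (Q y k * Q k x * mut_weight d x y k)"
        have m: "int (mut_step2 k (mut_step1 n d k Q) x y) = int (Q x y) + P1"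
                "int (mut_step2 k (mut_step1 n d k Q) y x) = int (Q y x) + P2"
          using N[OF x y] N[OF y x] xk yk xy unfolding P1_def P2_def by (auto simp: mut_step2_def)
        define T where "T = (B y k * \<bar>B k x\<bar> + \<bar>B y k\<bar> * B k x) div 2"
        have B'yx: "B' y x = B y x + T" unfolding B'_def T_def matrix_mutation_def using xk yk by simp
        have k: "k \<in> ?V" by (rule assms(2))
        have main: "int (d x) * (P1 - P2) = g y x * T"
        proof (cases "B y k > 0 \<and> B k x > 0")
          case True
          have T: "T = B y k * B k x" unfolding T_def using True by simp
          have P2: "P2 = 0" unfolding P2_def using Qi[OF y k] skc[OF y k] sgn[OF y k] True by simp
          have q1: "int (Q x k) = c k x" "int (Q k y) = c y k" using Qi[OF x k] Qi[OF k y] sgn[OF k x] sgn[OF y k] True by auto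
          define w where "w = int (mut_weight d y x k)"
          have P1: "P1 = c k x * c y k * w" unfolding P1_def w_def using q1 by simp
          have wq: "g y k * g k x * w = g y x * int (d k)" using mw_exact[of d y k x] unfolding w_def g_def by simp
          have "int (d k) * (int (d x) * P1) = (int (d x) * c k x) * (int (d k) * c y k) * w"
            unfolding P1 by (simp add: ac_simps)
          also have "\<dots> = B k x * B y k * (g y k * g k x * w)" using ex[OF k x] ex[OF y k] by (simp add: ac_simps)
          also have "\<dots> = int (d k) * (g y x * T)" unfolding wq T by (simp add: ac_simps)
          finally have e: "int (d k) * (int (d x) * P1) = int (d k) * (g y x * T)" .
          from cancel_int[OF dpos[OF k] e] have "int (d x) * P1 = g y x * T" .
          thus ?thesis using P2 by simp
        next
          case F1: False
          show ?thesis
          proof (cases "B y k < 0 \<and> B k x < 0")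
            case True
            have "B y k * \<bar>B k x\<bar> + \<bar>B y k\<bar> * B k x = 2 * (- (B y k * B k x))"
              using True by (simp add: abs_if algebra_simps)
            hence T: "T = - (B y k * B k x)" unfolding T_def by simp
            have P1: "P1 = 0" unfolding P1_def using Qi[OF k y] sgn[OF y k] True by simp
            have q2: "int (Q y k) = c k y" "int (Q k x) = c x k"
              using Qi[OF y k] Qi[OF k x] skc[OF y k] skc[OF k x] sgn[OF y k] sgn[OF k x] True by auto
            define w where "w = int (mut_weight d x y k)"
            have P2: "P2 = c k y * c x k * w" unfolding P2_def w_def using q2 by simp
            have wq: "g x k * g k y * w = g y x * int (d k)" using mw_exact[of d x k y] gc[of x y] unfolding w_def g_def by simp
            have "int (d y) * int (d k) * (int (d x) * P2) = (int (d y) * c k y) * (int (d k) * c x k) * int (d x) * w"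
              unfolding P2 by (simp add: ac_simps)
            also have "\<dots> = B k y * B x k * int (d x) * (g x k * g k y * w)" using ex[OF k y] ex[OF x k] by (simp add: ac_simps)
            also have "\<dots> = g y x * ((int (d k) * B k y) * (int (d x) * B x k))" unfolding wq by (simp add: ac_simps)
            also have "\<dots> = g y x * ((int (d y) * B y k) * (int (d k) * B k x))" using sk[OF k y] sk[OF x k] by simp
            also have "\<dots> = int (d y) * int (d k) * (- (g y x * T))" unfolding T by (simp add: ac_simps)
            finally have e: "int (d y) * int (d k) * (int (d x) * P2) = int (d y) * int (d k) * (- (g y x * T))" .
            have "int (d y) * int (d k) > 0" using dpos[OF k] dpos[OF y] by simp
            from cancel_int[OF this e] have "int (d x) * P2 = - (g y x * T)" .
            thus ?thesis using P1 by simp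
          next
            case F2: False
            have T: "T = 0" unfolding T_def using F1 F2
              by (cases "B y k > 0"; cases "B y k = 0"; cases "B k x > 0"; cases "B k x = 0"; auto simp: abs_if)
            have P1: "P1 = 0" unfolding P1_def using Qi[OF k y] Qi[OF x k] sgn[OF y k] sgn[OF k x] F1
              by (auto simp: max_def split: if_splits)
            have P2: "P2 = 0" unfolding P2_def using Qi[OF y k] Qi[OF k x] skc[OF y k] skc[OF k x] sgn[OF y k] sgn[OF k x] F2
              by (auto simp: max_def split: if_splits)
            show ?thesis using T P1 P2 by simp
          qed
        qed
        have cm: "cmat B' d y x = c y x + P1 - P2"
        proof -
          have "cmat B' d y x = g y x * B' y x div int (d x)" unfolding cmat_def g_def by simp
          also have "\<dots> = c y x + P1 - P2"
            by (rule div_exact) (use dpos[OF x] ex[OF y x] main B'yx g_def in \<open>auto simp: algebra_simps\<close>)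
          finally show ?thesis .
        qed
        have "int (wquiver_mutation n d k Q x y) = int (quiver_of n B' d x y)"
          using W m Q'i[OF x y] Qi[OF x y] Qi[OF y x] cm skc[OF x y] by (auto simp: max_def)
        thus ?thesis by simp
      qed
    qed
  qed
  show ?thesis unfolding wquiver_iso_def
    by (rule exI[of _ id]) (use key in \<open>auto simp: Q_def B'_def\<close>)
qed

end
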